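(* Let $X$ be a complex Banach space, $n\ge1$, $a_1,\ldots,a_n\in\mathbb{C}$, and let $D:\mathcal{C}^n(\mathbb{R},X)\to\mathcal{C}(\mathbb{R},X)$ be $D(y)=y^{(n)}+a_1y^{(n-1)}+\cdots+a_ny$. Suppose the characteristic polynomial $P(z)=z^n+a_1z^{n-1}+\cdots+a_n$ has $n$ distinct roots $r_1,\ldots,r_n$ with $\operatorname{Re} r_k\neq0$ for all $k$, and let $\varepsilon>0$. Let $V=V(r_1,\ldots,r_n)$, $V_k=V(r_1,\ldots,r_{k-1},r_{k+1},\ldots,r_n)$, and define $K$ by: (i) if $\operatorname{Re} r_k>0$ for all $k$: $K=\frac{1}{|V|}\int_0^\infty\Big|\sum_{k=1}^n(-1)^kV_ke^{-r_kx}\Big|dx$; (ii) if $\operatorname{Re} r_k<0$ for all $k$: $K=\frac{1}{|V|}\int_0^\infty\Big|\sum_{k=1}^n(-1)^kV_ke^{r_kx}\Big|dx$; (iii) if, for some $1\le p<n$ (after labeling the roots accordingly), $\operatorname{Re} r_k>0$ for $1\le k\le p$ and $\operatorname{Re} r_k<0$ for $p+1\le k\le n$: $K=\frac{1}{|V|}\int_0^\infty\Big(\Big|\sum_{k=1}^p(-1)^kV_ke^{-r_kx}\Big|+\Big|\sum_{k=p+1}^n(-1)^kV_ke^{r_kx}\Big|\Big)dx$. Then for every $y\in\mathcal{C}^n(\mathbb{R},X)$ with $\|D(y)\|_\infty\le\varepsilon$ there exists a unique $y_H\in\operatorname{Ker}D$ such that $\|y-y_H\|_\infty\le K\varepsi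lon$.
   Context: $\mathcal{C}^n(\mathbb{R},X)$ is the space of $n$ times differentiable functions $\mathbb{R}\to X$ with continuous $n$-th derivative, $\mathcal{C}(\mathbb{R},X)=\mathcal{C}^0(\mathbb{R},X)$; both carry the gauge $\|f\|_\infty=\sup_{t\in\mathbb{R}}\|f(t)\|\in[0,\infty]$. $\operatorname{Ker}D=\{y:D(y)=0\}=\{\sum_{k=1}^nC_ke^{r_kx}: C_k\in X\}$. For numbers $x_1,\ldots,x_m$, $V(x_1,\ldots,x_m)=\det(x_j^{i-1})_{1\le i,j\le m}=\prod_{1\le i<j\le m}(x_j-x_i)$ is the Vandermonde determinant (equal to $1$ when $m\le1$). *)

theory Defs
  imports "HOL-Analysis.Analysis"
begin

class complex_vector = real_vector +
  fixes cscale :: "complex \<Rightarrow> 'a \<Rightarrow> 'a"  (infixr \<open>*\<^sub>C\<close> 75)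
  assumes cscale_add_right: "c *\<^sub>C (x + y) = c *\<^sub>C x + c *\<^sub>C y"
    and cscale_add_left: "(b + c) *\<^sub>C x = b *\<^sub>C x + c *\<^sub>C x"
    and cscale_cscale: "b *\<^sub>C (c *\<^sub>C x) = (b * c) *\<^sub>C x"
    and cscale_one: "1 *\<^sub>C x = x"
    and cscale_of_real: "complex_of_real r *\<^sub>C x = r *\<^sub>R x"

class complex_normed_vector = complex_vector + real_normed_vector +
  assumes norm_cscale: "norm (c *\<^sub>C x) = cmod c * norm x"

class complex_banach = complex_normed_vector + banach

fun nth_deriv :: "nat \<Rightarrow> (real \<Rightarrow> 'a::real_normed_vector) \<Rightarrow> real \<Rightarrow> 'a" where
  "nth_deriv 0 f = f"
| "nth_deriv (Suc k) f = (\<lambda>t. vector_derivative (nth_deriv k f) (at t))"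

definition Cn :: "nat \<Rightarrow> (real \<Rightarrow> 'a::real_normed_vector) set" where
  "Cn n = {f. (\<forall>k<n. \<forall>t. nth_deriv k f differentiable (at t))
              \<and> continuous_on UNIV (nth_deriv n f)}"

definition sup_norm :: "(real \<Rightarrow> 'a::real_normed_vector) \<Rightarrow> ereal" where
  "sup_norm f = (SUP t. ereal (norm (f t)))"

definition Dop :: "nat \<Rightarrow> (nat \<Rightarrow> complex) \<Rightarrow> (real \<Rightarrow> 'a::complex_normed_vector) \<Rightarrow> real \<Rightarrow> 'a" where
  "Dop n a y = (\<lambda>t. nth_deriv n y t + (\<Sum>j=1..n. a j *\<^sub>C nth_deriv (n - j) y t))"

definition char_poly :: "nat \<Rightarrow> (nat \<Rightarrow> complex) \<Rightarrow> complex \<Rightarrow> complex" where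
  "char_poly n a z = z ^ n + (\<Sum>j=1..n. a j * z ^ (n - j))"

definition vandermonde :: "complex list \<Rightarrow> complex" where
  "vandermonde xs = (\<Prod>j<length xs. \<Prod>i<j. xs ! j - xs ! i)"

end

theory Submission
  imports Defs "HOL-Computational_Algebra.Polynomial"
begin

interpretation cv: module "cscale :: complex \<Rightarrow> 'a::complex_vector \<Rightarrow> 'a"
  by unfold_locales (auto simp: cscale_add_right cscale_add_left cscale_cscale cscale_one)

lemma cscale_scaleR_left: "(complex_of_real s * c) *\<^sub>C x = s *\<^sub>R (c *\<^sub>C (x::'a::complex_vector))"
  by (metis cscale_cscale cscale_of_real)

lemma cscale_scaleR_right: "c *\<^sub>C (s *\<^sub>R x) = s *\<^sub>R (c *\<^sub>C (x::'a::complex_vector))"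
  by (metis cscale_cscale cscale_of_real mult.commute)

lemma bb_cscale: "bounded_bilinear (\<lambda>(c::complex) (x::'a::complex_normed_vector). c *\<^sub>C x)"
proof
  fix a a' :: complex and b b' :: 'a and s :: real
  show "(a + a') *\<^sub>C b = a *\<^sub>C b + a' *\<^sub>C b" by (rule cscale_add_left)
  show "a *\<^sub>C (b + b') = a *\<^sub>C b + a *\<^sub>C b'" by (rule cscale_add_right)
  show "(s *\<^sub>R a) *\<^sub>C b = s *\<^sub>R (a *\<^sub>C b)" by (simp add: scaleR_conv_of_real cscale_scaleR_left)
  show "a *\<^sub>C (s *\<^sub>R b) = s *\<^sub>R (a *\<^sub>C b)" by (rule cscale_scaleR_right)
  show "\<exists>K. \<forall>a b. norm (a *\<^sub>C (b::'a)) \<le> norm a * norm b * K"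
    by (rule exI[of _ 1]) (simp add: norm_cscale)
qed

lemma bl_cscale: "bounded_linear (\<lambda>x::'a::complex_normed_vector. c *\<^sub>C x)"
  by (rule bounded_bilinear.bounded_linear_right[OF bb_cscale])

lemma has_vd_cexp: "((\<lambda>t::real. exp (c * complex_of_real t)) has_vector_derivative (c * exp (c * complex_of_real t))) (at t within S)"
  by (rule has_vector_derivative_real_field) (auto intro!: derivative_eq_intros)

lemma has_vd_cscale:
  assumes "(f has_vector_derivative f') (at x within s)"
    and "(g has_vector_derivative g') (at x within s)"
  shows "((\<lambda>x. f x *\<^sub>C (g x::'a::complex_normed_vector)) has_vector_derivative (f x *\<^sub>C g' + f' *\<^sub>C g x)) (at x within s)"
  using bounded_bilinear.has_vector_derivative[OF bb_cscale assms] by simp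

lemma has_vd_cscale_const:
  assumes "(g has_vector_derivative g') (at x within s)"
  shows "((\<lambda>x. c *\<^sub>C (g x::'a::complex_normed_vector)) has_vector_derivative (c *\<^sub>C g')) (at x within s)"
  using bounded_linear.has_vector_derivative[OF bl_cscale assms] by simp

lemma continuous_on_cscale[continuous_intros]:
  assumes "continuous_on S f" "continuous_on S g"
  shows "continuous_on S (\<lambda>x. f x *\<^sub>C (g x::'a::complex_normed_vector))"
  using bounded_bilinear.continuous_on[OF bb_cscale assms] by simp

lemma sup_norm_le_iff: "sup_norm f \<le> ereal c \<longleftrightarrow> (\<forall>t. norm (f t) \<le> c)"
  unfolding sup_norm_def by (simp add: SUP_le_iff)


lemma vandermonde_Cons: "vandermonde (x # xs) = prod_list (map (\<lambda>z. z - x) xs) * vandermonde xs"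
proof -
  have "vandermonde (x # xs) = (\<Prod>j<Suc (length xs). \<Prod>i<j. (x#xs) ! j - (x#xs) ! i)"
    by (simp add: vandermonde_def)
  also have "\<dots> = (\<Prod>j<length xs. \<Prod>i<Suc j. xs ! j - (x#xs) ! i)"
    by (subst prod.lessThan_Suc_shift) simp
  also have "\<dots> = (\<Prod>j<length xs. (xs ! j - x) * (\<Prod>i<j. xs ! j - xs ! i))"
    by (subst prod.lessThan_Suc_shift) simp
  also have "\<dots> = (\<Prod>j<length xs. xs ! j - x) * vandermonde xs"
    by (simp add: prod.distrib vandermonde_def)
  also have "(\<Prod>j<length xs. xs ! j - x) = prod_list (map (\<lambda>z. z - x) xs)"
    by (simp add: prod.list_conv_set_nth atLeast0LessThan)
  finally show ?thesis .
qed

lemma vandermonde_remove: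
  "vandermonde (us @ x # ws) = vandermonde (us @ ws) * prod_list (map (\<lambda>u. x - u) us) * prod_list (map (\<lambda>w. w - x) ws)"
proof (induction us)
  case Nil
  then show ?case by (simp add: vandermonde_Cons)
next
  case (Cons a us)
  show ?case
    by (simp add: vandermonde_Cons Cons.IH)
qed

lemma vandermonde_Nil[simp]: "vandermonde [] = 1"
  by (simp add: vandermonde_def)

lemma vandermonde_nonzero: "distinct xs \<Longrightarrow> vandermonde xs \<noteq> 0"
  by (induction xs) (auto simp: vandermonde_Cons prod_list_zero_iff)


lemma prod_list_map_upt: "prod_list (map f [a..<b]) = prod f {a..<b}"
  by (simp add: prod.distinct_set_conv_list[symmetric])

lemma upt_split3: "1 \<le> k \<Longrightarrow> k \<le> n \<Longrightarrow> [1..<n+1] = [1..<k] @ k # [k+1..<n+1]"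
proof -
  assume k: "1 \<le> k" "k \<le> n"
  have "[1..<n+1] = [1..<k] @ [k..<k+(n+1-k)]"
    using upt_add_eq_append[of 1 k "n+1-k"] k by simp
  also have "[k..<k+(n+1-k)] = k # [k+1..<n+1]"
    using k by (simp add: upt_conv_Cons)
  finally show ?thesis .
qed

locale setting =
  fixes n :: nat and a r :: "nat \<Rightarrow> complex"
  assumes n1: "n \<ge> 1"
    and roots: "\<forall>k\<in>{1..n}. char_poly n a (r k) = 0"
    and inj: "inj_on r {1..n}"
begin

definition PP :: "complex poly" where "PP = (\<Prod>i\<in>{1..n}. [:- r i, 1:])"
definition Q :: "nat \<Rightarrow> complex poly" where "Q k = (\<Prod>i\<in>{1..n}-{k}. [:- r i, 1:])"
definition cc :: "nat \<Rightarrow> complex" where "cc k = 1 / poly (Q k) (r k)"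

lemma degree_PP: "degree PP = n"
  unfolding PP_def by (subst degree_prod_sum_eq) auto

lemma lead_PP: "coeff PP n = 1"
  using lead_coeff_prod[of "\<lambda>i. [:- r i, 1:]" "{1..n}"] degree_PP unfolding PP_def by simp

definition Pc :: "complex poly" where "Pc = monom 1 n + (\<Sum>j=1..n. monom (a j) (n - j))"

lemma poly_Pc: "poly Pc z = char_poly n a z"
  by (simp add: Pc_def char_poly_def poly_sum poly_monom)

lemma coeff_Pc: "coeff Pc j = (if j = n then 1 else if j < n then a (n - j) else 0)"
proof -
  have "coeff Pc j = (if j = n then 1 else 0) + (\<Sum>i=1..n. if n - i = j then a i else 0)"
    by (simp add: Pc_def coeff_sum coeff_monom)
  also have "(\<Sum>i=1..n. if n - i = j then a i else 0) = (\<Sum>i=1..n. if i = n - j \<and> j < n then a i else 0)"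
    by (rule sum.cong) auto
  also have "\<dots> = (if j < n then a (n - j) else 0)"
    by (cases "j < n") (auto simp: sum.delta)
  finally show ?thesis using n1 by auto
qed

lemma Pc_eq_PP: "Pc = PP"
proof (rule poly_eqI_degree_lead_coeff[where n = n and A = "r ` {1..n}"])
  show "coeff Pc n = coeff PP n" using lead_PP coeff_Pc by simp
  show "n \<le> card (r ` {1..n})" using inj by (simp add: card_image)
  show "degree Pc \<le> n"
    by (rule degree_le) (auto simp: coeff_Pc)
  show "degree PP \<le> n" using degree_PP by simp
  fix z assume "z \<in> r ` {1..n}"
  then show "poly Pc z = poly PP z"
    using roots by (fastforce simp: poly_Pc PP_def poly_prod)
qed

lemma coeff_PP: "coeff PP j = (if j = n then 1 else if j < n then a (n - j) else 0)"
  using coeff_Pc Pc_eq_PP by simp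

lemma PP_split: "k \<in> {1..n} \<Longrightarrow> PP = [:- r k, 1:] * Q k"
  unfolding PP_def Q_def by (rule prod.remove) auto

lemma degree_Q: "k \<in> {1..n} \<Longrightarrow> degree (Q k) = n - 1"
  unfolding Q_def by (subst degree_prod_sum_eq) auto

lemma coeff_Q_ge: "k \<in> {1..n} \<Longrightarrow> j \<ge> n \<Longrightarrow> coeff (Q k) j = 0"
  using degree_Q n1 by (intro coeff_eq_0) auto

lemma poly_Q_other: "k \<in> {1..n} \<Longrightarrow> j \<in> {1..n} \<Longrightarrow> j \<noteq> k \<Longrightarrow> poly (Q k) (r j) = 0"
  unfolding Q_def poly_prod by (rule prod_zero) (auto intro!: bexI[of _ j])

lemma poly_Q_self: "k \<in> {1..n} \<Longrightarrow> poly (Q k) (r k) \<noteq> 0"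
proof -
  assume k: "k \<in> {1..n}"
  have "\<forall>i\<in>{1..n}-{k}. r k - r i \<noteq> 0"
    using inj_onD[OF inj _ k] by force
  then show ?thesis unfolding Q_def poly_prod by (simp add: prod_zero_iff)
qed

lemma lagrange: "(\<Sum>k\<in>{1..n}. smult (cc k) (Q k)) = 1"
proof (rule poly_eqI_degree[where A = "r ` {1..n}"])
  have cA: "card (r ` {1..n}) = n" using inj by (simp add: card_image)
  have "degree (\<Sum>k\<in>{1..n}. smult (cc k) (Q k)) \<le> n - 1"
    by (rule degree_sum_le) (auto intro: order.trans[OF degree_smult_le] simp: degree_Q)
  then show "degree (\<Sum>k\<in>{1..n}. smult (cc k) (Q k)) < card (r ` {1..n})"
    using cA n1 by linarith
  show "degree (1::complex poly) < card (r ` {1..n})" using cA n1 by simp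
  fix z assume "z \<in> r ` {1..n}"
  then obtain j where j: "j \<in> {1..n}" "z = r j" by auto
  have "poly (\<Sum>k\<in>{1..n}. smult (cc k) (Q k)) z = (\<Sum>k\<in>{1..n}. cc k * poly (Q k) (r j))"
    by (simp add: poly_sum j)
  also have "\<dots> = cc j * poly (Q j) (r j)"
  proof -
    have "(\<Sum>k\<in>{1..n}. cc k * poly (Q k) (r j)) = (\<Sum>k\<in>{1..n}. if k = j then cc j * poly (Q j) (r j) else 0)"
      by (rule sum.cong) (use j poly_Q_other in auto)
    then show ?thesis using j by simp
  qed
  also have "\<dots> = 1" using poly_Q_self[OF j(1)] by (simp add: cc_def)
  finally show "poly (\<Sum>k\<in>{1..n}. smult (cc k) (Q k)) z = poly 1 z" by simp
qed

abbreviation VV where "VV \<equiv> vandermonde (map r [1..<n+1])"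
abbreviation Vk where "Vk k \<equiv> vandermonde (map r ([1..<k] @ [k+1..<n+1]))"

lemma VV_nonzero: "VV \<noteq> 0"
proof -
  have "set [1..<n+1] = {1..n}" by auto
  then show ?thesis using inj by (intro vandermonde_nonzero) (simp add: distinct_map)
qed

lemma cc_vandermonde:
  assumes k: "k \<in> {1..n}"
  shows "(-1)^k * Vk k = (-1)^n * VV * cc k"
proof -
  define A where "A = (\<Prod>i\<in>{1..<k}. r k - r i)"
  define B where "B = (\<Prod>i\<in>{k+1..<n+1}. r i - r k)"
  have V: "VV = Vk k * A * B"
    using vandermonde_remove[of "map r [1..<k]" "r k" "map r [k+1..<n+1]"] upt_split3[of k n] k
    by (simp add: A_def B_def prod_list_map_upt o_def)
  have eq: "{1..n} - {k} = {1..<k} \<union> {k+1..<n+1}" using k by auto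
  have "poly (Q k) (r k) = (\<Prod>i\<in>{1..<k} \<union> {k+1..<n+1}. r k - r i)"
    unfolding Q_def poly_prod eq by simp
  also have "\<dots> = (\<Prod>i\<in>{1..<k}. r k - r i) * (\<Prod>i\<in>{k+1..<n+1}. r k - r i)"
    by (rule prod.union_disjoint) auto
  also have "(\<Prod>i\<in>{k+1..<n+1}. r k - r i) = (\<Prod>i\<in>{k+1..<n+1}. (-1) * (r i - r k))"
    by simp
  also have "\<dots> = (\<Prod>i\<in>{k+1..<n+1}. (-1::complex)) * B"
    unfolding B_def by (rule prod.distrib)
  also have "(\<Prod>i\<in>{k+1..<n+1}. (-1::complex)) = (-1)^(n-k)" by simp
  finally have Q: "poly (Q k) (r k) = (-1)^(n-k) * A * B" by (simp add: A_def mult.assoc)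
  have "A * B \<noteq> 0" using poly_Q_self[OF k] Q by auto
  have nk: "(-1::complex)^k * (-1)^(n-k) = (-1)^n"
    using k by (simp add: power_add[symmetric])
  define X where "X = (-1::complex)^(n-k) * A * B"
  have X0: "X \<noteq> 0" using \<open>A * B \<noteq> 0\<close> by (simp add: X_def)
  have "(-1)^n * VV * cc k = ((-1)^k * Vk k) * X / X"
    unfolding cc_def Q V X_def nk[symmetric] by (simp add: ac_simps)
  also have "\<dots> = (-1)^k * Vk k" using X0 by simp
  finally show ?thesis by simp
qed

end

lemma coeff_lin_mult: "coeff ([:c, 1:] * p) j = c * coeff p j + (if j = 0 then 0 else coeff p (j - 1))" for c :: complex
  by (cases j) (simp_all add: mult_pCons_left coeff_pCons)

context setting
begin

definition ud :: "(real \<Rightarrow> 'x::complex_normed_vector) \<Rightarrow> nat \<Rightarrow> real \<Rightarrow> 'x" where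
  "ud y k t = (\<Sum>i<n. coeff (Q k) i *\<^sub>C nth_deriv i y t)"

lemma deriv_y:
  assumes "y \<in> Cn n" "i < n"
  shows "(nth_deriv i y has_vector_derivative nth_deriv (Suc i) y t) (at t within S)"
proof -
  have "nth_deriv i y differentiable (at t)" using assms by (simp add: Cn_def)
  then have "(nth_deriv i y has_vector_derivative vector_derivative (nth_deriv i y) (at t)) (at t)"
    by (simp add: vector_derivative_works)
  then show ?thesis by (simp add: has_vector_derivative_at_within)
qed

lemma Dop_PP: "Dop n a y t = (\<Sum>j\<le>n. coeff PP j *\<^sub>C nth_deriv j y t)"
proof -
  have "(\<Sum>j\<le>n. coeff PP j *\<^sub>C nth_deriv j y t) = (\<Sum>j<n. coeff PP j *\<^sub>C nth_deriv j y t) + nth_deriv n y t"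
    by (simp add: lessThan_Suc_atMost[symmetric] coeff_PP cscale_one)
  also have "(\<Sum>j<n. coeff PP j *\<^sub>C nth_deriv j y t) = (\<Sum>j<n. a (n - j) *\<^sub>C nth_deriv j y t)"
    by (rule sum.cong) (auto simp: coeff_PP)
  also have "\<dots> = (\<Sum>j=1..n. a j *\<^sub>C nth_deriv (n - j) y t)"
    by (rule sum.reindex_bij_witness[of _ "\<lambda>j. n - j" "\<lambda>j. n - j"]) auto
  finally show ?thesis by (simp add: Dop_def add.commute)
qed

lemma ud_deriv:
  assumes k: "k \<in> {1..n}" and y: "y \<in> Cn n"
  shows "(ud y k has_vector_derivative (r k *\<^sub>C ud y k t + Dop n a y t)) (at t within S)"
proof -
  let ?q = "coeff (Q k)"
  have "((\<lambda>t. \<Sum>i<n. ?q i *\<^sub>C nth_deriv i y t) has_vector_derivative (\<Sum>i<n. ?q i *\<^sub>C nth_deriv (Suc i) y t)) (at t within S)"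
    by (intro has_vector_derivative_sum has_vd_cscale_const deriv_y[OF y]) auto
  moreover have "(\<Sum>i<n. ?q i *\<^sub>C nth_deriv (Suc i) y t) = r k *\<^sub>C ud y k t + Dop n a y t"
  proof -
    obtain m where m: "n = Suc m" using n1 by (cases n) auto
    have "Dop n a y t = (\<Sum>j\<le>n. (- r k * ?q j + (if j = 0 then 0 else ?q (j - 1))) *\<^sub>C nth_deriv j y t)"
      unfolding Dop_PP PP_split[OF k] coeff_lin_mult by simp
    also have "\<dots> = (\<Sum>j\<le>n. (- r k * ?q j) *\<^sub>C nth_deriv j y t) + (\<Sum>j\<le>n. (if j = 0 then 0 else ?q (j - 1)) *\<^sub>C nth_deriv j y t)"
      by (simp add: cscale_add_left sum.distrib[symmetric] cv.scale_left_diff_distrib)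
    also have "(\<Sum>j\<le>n. (- r k * ?q j) *\<^sub>C nth_deriv j y t) = (\<Sum>j<n. (- r k * ?q j) *\<^sub>C nth_deriv j y t)"
      by (simp add: lessThan_Suc_atMost[symmetric] coeff_Q_ge[OF k])
    also have "\<dots> = - (r k *\<^sub>C ud y k t)"
      by (simp add: ud_def cv.scale_sum_right cscale_cscale sum_negf)
    also have "(\<Sum>j\<le>n. (if j = 0 then 0 else ?q (j - 1)) *\<^sub>C nth_deriv j y t) = (\<Sum>i<n. ?q i *\<^sub>C nth_deriv (Suc i) y t)"
      unfolding m atMost_Suc_eq_insert_0 by (simp add: sum.reindex lessThan_Suc_atMost)
    finally show ?thesis by (simp add: algebra_simps)
  qed
  ultimately show ?thesis by (simp add: ud_def[abs_def])
qed

lemma y_ud: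
  assumes y: "y \<in> Cn n"
  shows "y t = (\<Sum>k\<in>{1..n}. cc k *\<^sub>C ud y k t)"
proof -
  have "(\<Sum>k\<in>{1..n}. cc k *\<^sub>C ud y k t) = (\<Sum>i<n. (\<Sum>k\<in>{1..n}. cc k * coeff (Q k) i) *\<^sub>C nth_deriv i y t)"
    by (simp add: ud_def cv.scale_sum_right cv.scale_sum_left cscale_cscale) (rule sum.swap)
  also have "\<dots> = (\<Sum>i<n. coeff 1 i *\<^sub>C nth_deriv i y t)"
    using arg_cong[OF lagrange, of "\<lambda>p. coeff p i" for i] by (simp add: coeff_sum)
  also have "\<dots> = (\<Sum>i<n. (if i = 0 then nth_deriv 0 y t else 0))"
    by (rule sum.cong) (auto simp: coeff_1 cscale_one)
  also have "\<dots> = y t" using n1 by simp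
  finally show ?thesis by simp
qed

end

lemma tail_limit:
  fixes g :: "real \<Rightarrow> 'a::banach"
  assumes \<alpha>: "\<alpha> > 0" and d: "\<And>x. (g has_vector_derivative dg x) (at x)"
    and b: "\<And>x. norm (dg x) \<le> M * exp (- \<alpha> * x)"
  shows "\<exists>L. \<forall>s. norm (g s - L) \<le> M / \<alpha> * exp (- \<alpha> * s)"
proof -
  have M: "M \<ge> 0"
  proof -
    have "norm (dg 0) \<le> M" using b[of 0] by simp
    moreover have "0 \<le> norm (dg 0)" by simp
    ultimately show ?thesis by linarith
  qed
  have step: "norm (g u - g s) \<le> M/\<alpha> * exp (- \<alpha> * s) - M/\<alpha> * exp (- \<alpha> * u)" if "s \<le> u" for s u
  proof (cases "s = u")
    case True then show ?thesis by simp
  next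
    case False
    with that have "s < u" by simp
    have "norm (g u - g s) \<le> (-(M/\<alpha>) * exp (- \<alpha> * u)) - (-(M/\<alpha>) * exp (- \<alpha> * s))"
    proof (rule differentiable_bound_general[OF \<open>s<u\<close>, where f'=dg and \<phi>' = "\<lambda>x. M * exp (- \<alpha> * x)"])
      show "continuous_on {s..u} g"
        by (meson d has_vector_derivative_continuous continuous_at_imp_continuous_on)
      show "continuous_on {s..u} (\<lambda>x. -(M/\<alpha>) * exp (- \<alpha> * x))" by (intro continuous_intros)
      show "(g has_vector_derivative dg x) (at x)" for x by (rule d)
      show "((\<lambda>x. -(M/\<alpha>) * exp (- \<alpha> * x)) has_vector_derivative M * exp (- \<alpha> * x)) (at x)" for x
        unfolding has_real_derivative_iff_has_vector_derivative[symmetric]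
        using \<alpha> by (auto intro!: derivative_eq_intros simp: field_simps)
      show "norm (dg x) \<le> M * exp (- \<alpha> * x)" for x by (rule b)
    qed
    then show ?thesis by (simp add: algebra_simps)
  qed
  have step2: "norm (g u - g s) \<le> M/\<alpha> * exp (- \<alpha> * s)" if "s \<le> u" for s u
  proof -
    have "0 \<le> M/\<alpha> * exp (- \<alpha> * u)" using M \<alpha> by simp
    with step[OF that] show ?thesis by linarith
  qed
  have ex: "\<And>N. exp (- \<alpha> * real N) = exp(-\<alpha>)^N"
    by (metis exp_of_nat_mult mult.commute)
  have lim0: "(\<lambda>N::nat. M/\<alpha> * exp (- \<alpha> * real N)) \<longlonglongrightarrow> 0"
  proof -
    have "(\<lambda>N::nat. exp(-\<alpha>) ^ N) \<longlonglongrightarrow> 0" by (rule LIMSEQ_power_zero) (use \<alpha> in auto)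
    then have "(\<lambda>N::nat. M/\<alpha> * exp(-\<alpha>)^N) \<longlonglongrightarrow> M/\<alpha> * 0" by (rule tendsto_mult[OF tendsto_const])
    then show ?thesis by (simp only: ex) simp
  qed
  have C: "Cauchy (\<lambda>N::nat. g (real N))"
  proof (rule metric_CauchyI)
    fix e :: real assume "e > 0"
    from order_tendstoD(2)[OF lim0 this] obtain N where N: "\<forall>m\<ge>N. M/\<alpha> * exp (- \<alpha> * real m) < e"
      by (auto simp: eventually_sequentially)
    show "\<exists>N. \<forall>m\<ge>N. \<forall>n\<ge>N. dist (g (real m)) (g (real n)) < e"
    proof (intro exI allI impI)
      fix m nn assume mn: "m \<ge> N" "nn \<ge> N"
      show "dist (g (real m)) (g (real nn)) < e"
      proof (cases "m \<le> nn")
        case True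
        then have "norm (g (real nn) - g (real m)) \<le> M/\<alpha>*exp (- \<alpha> * real m)" by (intro step2) auto
        then show ?thesis using N mn by (fastforce simp: dist_norm norm_minus_commute)
      next
        case False
        then have "norm (g (real m) - g (real nn)) \<le> M/\<alpha>*exp (- \<alpha> * real nn)" by (intro step2) auto
        then show ?thesis using N mn by (fastforce simp: dist_norm)
      qed
    qed
  qed
  then obtain L where L: "(\<lambda>N::nat. g (real N)) \<longlonglongrightarrow> L"
    using Cauchy_convergent_iff convergent_def by blast
  show ?thesis
  proof (intro exI allI)
    fix s
    have "(\<lambda>N::nat. norm (g (real N) - g s)) \<longlonglongrightarrow> norm (L - g s)" by (intro tendsto_intros L)
    moreover obtain N::nat where "s \<le> real N" using real_arch_simple by blast
    then have "\<forall>m\<ge>N. norm (g (real m) - g s) \<le> M/\<alpha> * exp (- \<alpha> * s)"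
    proof (intro allI impI)
      fix m assume "N \<le> m"
      with \<open>s \<le> real N\<close> have "s \<le> real m" by linarith
      then show "norm (g (real m) - g s) \<le> M/\<alpha> * exp (- \<alpha> * s)" by (rule step2)
    qed
    ultimately have "norm (L - g s) \<le> M/\<alpha>*exp (- \<alpha> * s)" by (rule Lim_bounded)
    then show "norm (g s - L) \<le> M / \<alpha> * exp (- \<alpha> * s)" by (simp add: norm_minus_commute)
  qed
qed


lemma has_vd_cscale_left:
  assumes "(f has_vector_derivative f') (at x within s)"
  shows "((\<lambda>x. f x *\<^sub>C (v::'a::complex_normed_vector)) has_vector_derivative (f' *\<^sub>C v)) (at x within s)"
  using has_vd_cscale[OF assms has_vector_derivative_const[of v]]
  by (simp add: cv.scale_zero_right)

lemma has_vd_cexp_mult: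
  "((\<lambda>t::real. c * exp (q * complex_of_real t)) has_vector_derivative (c * q * exp (q * complex_of_real t))) (at t within S)"
  by (rule has_vector_derivative_real_field) (auto intro!: derivative_eq_intros)

context setting
begin

definition kerf :: "(nat \<Rightarrow> 'x::complex_normed_vector) \<Rightarrow> real \<Rightarrow> 'x" where
  "kerf G t = (\<Sum>k\<in>{1..n}. exp (r k * complex_of_real t) *\<^sub>C G k)"

lemma hvd_kerf_gen:
  "((\<lambda>t. \<Sum>k\<in>{1..n}. (c k * exp (r k * complex_of_real t)) *\<^sub>C (G k::'x::complex_normed_vector)) has_vector_derivative
     (\<Sum>k\<in>{1..n}. (c k * r k * exp (r k * complex_of_real t)) *\<^sub>C G k)) (at t within S)"
  by (intro has_vector_derivative_sum has_vd_cscale_left has_vd_cexp_mult)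

lemma nth_deriv_kerf:
  "nth_deriv j (kerf G) = (\<lambda>t. \<Sum>k\<in>{1..n}. (r k ^ j * exp (r k * complex_of_real t)) *\<^sub>C G k)"
proof (induction j)
  case 0
  then show ?case by (simp add: kerf_def[abs_def])
next
  case (Suc j)
  show ?case
  proof
    fix t
    have "nth_deriv (Suc j) (kerf G) t = vector_derivative (nth_deriv j (kerf G)) (at t)" by simp
    also have "\<dots> = (\<Sum>k\<in>{1..n}. (r k ^ j * r k * exp (r k * complex_of_real t)) *\<^sub>C G k)"
      unfolding Suc.IH by (rule vector_derivative_at[OF hvd_kerf_gen])
    finally show "nth_deriv (Suc j) (kerf G) t = (\<Sum>k\<in>{1..n}. (r k ^ Suc j * exp (r k * complex_of_real t)) *\<^sub>C G k)"
      by (simp add: mult.commute mult.left_commute)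
  qed
qed

lemma kerf_Cn: "kerf G \<in> Cn n"
  unfolding Cn_def
proof safe
  fix k t assume "k < n"
  show "nth_deriv k (kerf G) differentiable (at t)"
    unfolding nth_deriv_kerf by (rule differentiableI_vector[OF hvd_kerf_gen])
next
  show "continuous_on UNIV (nth_deriv n (kerf G))"
    unfolding nth_deriv_kerf by (intro continuous_intros)
qed

lemma Dop_kerf: "Dop n a (kerf G) = (\<lambda>_. 0)"
proof
  fix t
  let ?e = "\<lambda>k. exp (r k * complex_of_real t)"
  have "Dop n a (kerf G) t = (\<Sum>k\<in>{1..n}. (r k ^ n * ?e k) *\<^sub>C G k) +
      (\<Sum>j=1..n. a j *\<^sub>C (\<Sum>k\<in>{1..n}. (r k ^ (n - j) * ?e k) *\<^sub>C G k))"
    by (simp add: Dop_def nth_deriv_kerf)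
  also have "(\<Sum>j=1..n. a j *\<^sub>C (\<Sum>k\<in>{1..n}. (r k ^ (n - j) * ?e k) *\<^sub>C G k)) =
      (\<Sum>k\<in>{1..n}. (\<Sum>j=1..n. a j * r k ^ (n - j) * ?e k) *\<^sub>C G k)"
    by (simp add: cv.scale_sum_right cv.scale_sum_left cscale_cscale mult.assoc) (rule sum.swap)
  also have "(\<Sum>k\<in>{1..n}. (r k ^ n * ?e k) *\<^sub>C G k) + \<dots> = (\<Sum>k\<in>{1..n}. (char_poly n a (r k) * ?e k) *\<^sub>C G k)"
    by (simp add: sum.distrib[symmetric] cscale_add_left[symmetric] char_poly_def distrib_right sum_distrib_right)
  also have "\<dots> = 0" using roots by simp
  finally show "Dop n a (kerf G) t = 0" .
qed

lemma g_deriv: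
  assumes k: "k \<in> {1..n}" and y: "y \<in> Cn n"
  shows "((\<lambda>s. exp (- r k * complex_of_real s) *\<^sub>C ud y k s) has_vector_derivative
           exp (- r k * complex_of_real s) *\<^sub>C Dop n a y s) (at s within S)"
proof -
  have "((\<lambda>s. exp (- r k * complex_of_real s) *\<^sub>C ud y k s) has_vector_derivative
     exp (- r k * complex_of_real s) *\<^sub>C (r k *\<^sub>C ud y k s + Dop n a y s) + (- r k * exp (- r k * complex_of_real s)) *\<^sub>C ud y k s) (at s within S)"
    by (rule has_vd_cscale[OF has_vd_cexp ud_deriv[OF k y]])
  moreover have "exp (- r k * complex_of_real s) *\<^sub>C (r k *\<^sub>C ud y k s + Dop n a y s) + (- r k * exp (- r k * complex_of_real s)) *\<^sub>C ud y k s
      = exp (- r k * complex_of_real s) *\<^sub>C Dop n a y s"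
    by (simp add: cscale_add_right cscale_cscale mult.commute)
  ultimately show ?thesis by simp
qed

lemma ud_exp: "exp (r k * complex_of_real t) *\<^sub>C (exp (- r k * complex_of_real t) *\<^sub>C u) = u"
  by (simp add: cscale_cscale exp_add[symmetric] cscale_one)

lemma ker_repr:
  assumes y: "y \<in> Cn n" and D: "Dop n a y = (\<lambda>_. 0)"
  shows "y = kerf (\<lambda>k. cc k *\<^sub>C (exp (- r k * complex_of_real 0) *\<^sub>C ud y k 0))"
proof
  fix t
  have const: "exp (- r k * complex_of_real t) *\<^sub>C ud y k t = exp (- r k * complex_of_real 0) *\<^sub>C ud y k 0"
    if k: "k \<in> {1..n}" for k
  proof -
    have "\<And>s. ((\<lambda>s. exp (- r k * complex_of_real s) *\<^sub>C ud y k s) has_vector_derivative 0) (at s within UNIV)"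
      using g_deriv[OF k y] D by (simp add: cv.scale_zero_right)
    then obtain c where "\<And>s. s \<in> UNIV \<Longrightarrow> exp (- r k * complex_of_real s) *\<^sub>C ud y k s = c"
      by (rule has_vector_derivative_zero_constant[OF convex_UNIV]) blast
    then show ?thesis by (metis UNIV_I)
  qed
  have "y t = (\<Sum>k\<in>{1..n}. cc k *\<^sub>C ud y k t)" by (rule y_ud[OF y])
  also have "\<dots> = (\<Sum>k\<in>{1..n}. cc k *\<^sub>C (exp (r k * complex_of_real t) *\<^sub>C (exp (- r k * complex_of_real t) *\<^sub>C ud y k t)))"
    by (simp only: ud_exp)
  also have "\<dots> = (\<Sum>k\<in>{1..n}. exp (r k * complex_of_real t) *\<^sub>C (cc k *\<^sub>C (exp (- r k * complex_of_real 0) *\<^sub>C ud y k 0)))"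
    by (rule sum.cong[OF refl]) (simp only: const, simp add: cscale_cscale mult.commute)
  finally show "y t = kerf (\<lambda>k. cc k *\<^sub>C (exp (- r k * complex_of_real 0) *\<^sub>C ud y k 0)) t"
    by (simp add: kerf_def)
qed

end

context setting
begin

lemma kerf_bounded_zero:
  assumes re: "\<forall>k\<in>{1..n}. Re (r k) \<noteq> 0" and bnd: "\<forall>t. norm (kerf G t) \<le> M"
    and k: "k \<in> {1..n}"
  shows "G k = (0::'x::complex_normed_vector)"
proof (rule ccontr)
  assume Gk: "G k \<noteq> 0"
  define I where "I = {1..n}"
  define S where "S = (\<Sum>i\<in>I. \<Sum>j\<in>I. cmod (r i - r j))"
  define h where "h = 1 / (1 + S)"
  have S0: "S \<ge> 0" unfolding S_def by (intro sum_nonneg) auto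
  have hpos: "h > 0" using S0 by (simp add: h_def)
  have Sh: "S * h < 1" using S0 by (simp add: h_def)
  have le_S: "cmod (r i - r j) \<le> S" if "i \<in> I" "j \<in> I" for i j
  proof -
    have "cmod (r i - r j) \<le> (\<Sum>j\<in>I. cmod (r i - r j))"
      by (rule member_le_sum) (use that in \<open>auto simp: I_def\<close>)
    also have "\<dots> \<le> S" unfolding S_def
      by (rule member_le_sum[of i I "\<lambda>i. \<Sum>j\<in>I. cmod (r i - r j)"]) (use that in \<open>auto simp: I_def intro: sum_nonneg\<close>)
    finally show ?thesis .
  qed
  define z where "z i = exp (r i * complex_of_real h)" for i
  have zinj: "z i \<noteq> z j" if ij: "i \<in> I" "j \<in> I" "i \<noteq> j" for i j
  proof
    assume zz: "z i = z j"
    obtain m :: int where m: "r i * complex_of_real h = r j * complex_of_real h + (of_int (2 * m) * pi) * \<i>"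
      using zz exp_eq[of "r i * complex_of_real h" "r j * complex_of_real h"] unfolding z_def by blast
    have d: "(r i - r j) * complex_of_real h = (of_int (2 * m) * pi) * \<i>"
      using m by (simp add: left_diff_distrib)
    show False
    proof (cases "m = 0")
      case True
      then have "(r i - r j) * complex_of_real h = 0" using d by simp
      then have "r i = r j" using hpos by simp
      then show False using inj_onD[OF inj _ ij(1,2)[unfolded I_def]] ij(3) by blast
    next
      case False
      have "cmod ((r i - r j) * complex_of_real h) = cmod ((of_int (2 * m) * pi) * \<i>)"
        using d by simp
      also have "\<dots> = 2 * \<bar>real_of_int m\<bar> * pi" by (simp add: norm_mult abs_mult)
      finally have eq: "cmod (r i - r j) * h = 2 * \<bar>real_of_int m\<bar> * pi" using hpos by (simp add: norm_mult)
      have "1 \<le> \<bar>real_of_int m\<bar>" using False by linarith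
      then have "2 * pi \<le> 2 * \<bar>real_of_int m\<bar> * pi" by simp
      moreover have "cmod (r i - r j) * h \<le> S * h" using le_S[OF ij(1,2)] hpos by (simp add: mult_right_mono)
      ultimately show False using Sh pi_gt3 eq by linarith
    qed
  qed
  define L where "L = (\<Prod>l\<in>I-{k}. [:- z l, 1:])"
  have Lk: "poly L (z k) \<noteq> 0"
    unfolding L_def poly_prod using zinj k by (auto simp: I_def prod_zero_iff)
  have Lm: "poly L (z m) = 0" if "m \<in> I" "m \<noteq> k" for m
    unfolding L_def poly_prod by (rule prod_zero) (use that in \<open>auto simp: I_def intro!: bexI[of _ m]\<close>)
  define N where "N = degree L"
  define M' where "M' = (\<Sum>j\<le>N. cmod (coeff L j) * M)"
  have key: "(\<Sum>j\<le>N. coeff L j *\<^sub>C kerf G (t + real j * h)) = (poly L (z k) * exp (r k * complex_of_real t)) *\<^sub>C G k" for t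
  proof -
    have e: "exp (r m * complex_of_real (t + real j * h)) = exp (r m * complex_of_real t) * z m ^ j" for m j
    proof -
      have "r m * complex_of_real (t + real j * h) = r m * complex_of_real t + of_nat j * (r m * complex_of_real h)"
        by (simp add: algebra_simps)
      then show ?thesis by (simp add: z_def exp_add exp_of_nat_mult)
    qed
    have "(\<Sum>j\<le>N. coeff L j *\<^sub>C kerf G (t + real j * h)) =
        (\<Sum>j\<le>N. \<Sum>m\<in>I. (coeff L j * (exp (r m * complex_of_real t) * z m ^ j)) *\<^sub>C G m)"
      unfolding kerf_def e I_def by (simp add: cv.scale_sum_right cscale_cscale)
    also have "\<dots> = (\<Sum>m\<in>I. \<Sum>j\<le>N. (coeff L j * (exp (r m * complex_of_real t) * z m ^ j)) *\<^sub>C G m)"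
      by (rule sum.swap)
    also have "\<dots> = (\<Sum>m\<in>I. ((\<Sum>j\<le>N. coeff L j * z m ^ j) * exp (r m * complex_of_real t)) *\<^sub>C G m)"
      by (rule sum.cong[OF refl]) (simp add: cv.scale_sum_left[symmetric] sum_distrib_left mult_ac)
    also have "\<dots> = (\<Sum>m\<in>I. (poly L (z m) * exp (r m * complex_of_real t)) *\<^sub>C G m)"
      by (simp add: poly_altdef N_def)
    also have "\<dots> = (\<Sum>m\<in>I. if m = k then (poly L (z k) * exp (r k * complex_of_real t)) *\<^sub>C G k else 0)"
      by (rule sum.cong) (auto simp: Lm cv.scale_zero_left)
    also have "\<dots> = (poly L (z k) * exp (r k * complex_of_real t)) *\<^sub>C G k"
      using k by (simp add: I_def)
    finally show ?thesis .
  qed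
  have bound: "cmod (poly L (z k)) * exp (Re (r k) * t) * norm (G k) \<le> M'" for t
  proof -
    have "cmod (poly L (z k)) * exp (Re (r k) * t) * norm (G k) = norm ((poly L (z k) * exp (r k * complex_of_real t)) *\<^sub>C G k)"
      by (simp add: norm_cscale norm_mult)
    also have "\<dots> = norm (\<Sum>j\<le>N. coeff L j *\<^sub>C kerf G (t + real j * h))" by (simp add: key)
    also have "\<dots> \<le> (\<Sum>j\<le>N. norm (coeff L j *\<^sub>C kerf G (t + real j * h)))" by (rule norm_sum)
    also have "\<dots> \<le> M'" unfolding M'_def
      by (intro sum_mono) (simp add: norm_cscale bnd mult_left_mono)
    finally show ?thesis .
  qed
  have M0: "M \<ge> 0" using bnd norm_ge_zero order.trans by blast
  then have M'0: "M' \<ge> 0" unfolding M'_def by (intro sum_nonneg) auto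
  define c where "c = cmod (poly L (z k)) * norm (G k)"
  have c0: "c > 0" using Lk Gk by (simp add: c_def)
  have rk: "Re (r k) \<noteq> 0" using re k by auto
  define t where "t = ln (M' / c + 1) / Re (r k)"
  have "exp (Re (r k) * t) = M' / c + 1"
  proof -
    have "0 < M' / c + 1" using M'0 c0 by (simp add: add_nonneg_pos)
    then show ?thesis using rk by (simp add: t_def)
  qed
  then have "c * (M' / c + 1) \<le> M'" using bound[of t] by (simp add: c_def mult_ac)
  moreover have "c * (M' / c + 1) = M' + c" using c0 by (simp add: field_simps)
  ultimately show False using c0 by linarith
qed

end

lemma deriv_integral_bound:
  fixes \<Phi> :: "real \<Rightarrow> 'a::real_normed_vector" and w :: "real \<Rightarrow> real"
  assumes T: "0 < T" and d: "\<And>s. (\<Phi> has_vector_derivative \<Phi>' s) (at s)"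
    and cw: "continuous_on UNIV w" and b: "\<And>s. norm (\<Phi>' s) \<le> w s"
  shows "norm (\<Phi> T - \<Phi> 0) \<le> integral {0..T} w"
proof -
  have cw': "continuous_on {0..T} w" using cw by (rule continuous_on_subset) auto
  have dI: "((\<lambda>u. integral {0..u} w) has_vector_derivative w x) (at x within {0..T})" if "x \<in> {0..T}" for x
    by (rule integral_has_vector_derivative[OF cw' that])
  have "norm (\<Phi> T - \<Phi> 0) \<le> integral {0..T} w - integral {0..0} w"
  proof (rule differentiable_bound_general[OF T, where f' = \<Phi>' and \<phi>' = w])
    show "continuous_on {0..T} \<Phi>"
      by (meson d has_vector_derivative_continuous continuous_at_imp_continuous_on)
    show "continuous_on {0..T} (\<lambda>u. integral {0..u} w)"
      unfolding continuous_on_eq_continuous_within using dI has_vector_derivative_continuous by blast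
    show "(\<Phi> has_vector_derivative \<Phi>' x) (at x)" for x by (rule d)
    show "((\<lambda>u. integral {0..u} w) has_vector_derivative w x) (at x)" if "0 < x" "x < T" for x
      using dI[of x] that at_within_interior[of x "{0..T}"] by simp
    show "norm (\<Phi>' x) \<le> w x" for x by (rule b)
  qed
  then show ?thesis by simp
qed

lemma tail_seq:
  fixes g :: "real \<Rightarrow> 'a::real_normed_vector"
  assumes \<alpha>: "\<alpha> > 0" and b: "\<forall>s. norm (g s - L) \<le> M / \<alpha> * exp (- \<alpha> * s)"
  shows "(\<lambda>m::nat. g (t + real m)) \<longlonglongrightarrow> L"
proof -
  have ex: "exp (- \<alpha> * (t + real m)) = exp (- \<alpha> * t) * exp (-\<alpha>) ^ m" for m
    by (simp add: exp_add[symmetric] exp_of_nat_mult[symmetric] algebra_simps)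
  have "(\<lambda>m::nat. exp(-\<alpha>) ^ m) \<longlonglongrightarrow> 0" by (rule LIMSEQ_power_zero) (use \<alpha> in auto)
  then have "(\<lambda>m::nat. (M / \<alpha> * exp (- \<alpha> * t)) * exp(-\<alpha>) ^ m) \<longlonglongrightarrow> (M / \<alpha> * exp (- \<alpha> * t)) * 0"
    by (rule tendsto_mult[OF tendsto_const])
  then have z: "(\<lambda>m::nat. M / \<alpha> * exp (- \<alpha> * (t + real m))) \<longlonglongrightarrow> 0"
    by (simp only: ex mult.assoc) simp
  have "(\<lambda>m::nat. g (t + real m) - L) \<longlonglongrightarrow> 0"
    by (rule Lim_null_comparison[OF always_eventually z]) (use b in auto)
  then have "(\<lambda>m::nat. g (t + real m) - L + L) \<longlonglongrightarrow> 0 + L" by (rule tendsto_add[OF _ tendsto_const])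
  then show ?thesis by simp
qed

lemma exp_int1: "a > 0 \<Longrightarrow> (\<lambda>x::real. c * exp (- (a * x))) integrable_on {0..}"
  using integrable_on_cmult_left[OF integrable_on_exp_minus_to_infinity[of a 0], of c] by simp

lemma exp_int2: "a < 0 \<Longrightarrow> (\<lambda>x::real. c * exp (a * x)) integrable_on {0..}"
  using exp_int1[of "-a" c] by simp

context setting
begin

definition AP :: "nat \<Rightarrow> real \<Rightarrow> complex" where
  "AP p s = (\<Sum>k=1..p. cc k * exp (- r k * complex_of_real s))"
definition BN :: "nat \<Rightarrow> real \<Rightarrow> complex" where
  "BN p s = (\<Sum>k=p+1..n. cc k * exp (r k * complex_of_real s))"

lemma FAB_integrable:
  assumes "p \<le> n" and pos: "\<forall>k\<in>{1..p}. Re (r k) > 0" and neg: "\<forall>k\<in>{p+1..n}. Re (r k) < 0"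
  shows "(\<lambda>x. cmod (AP p x) + cmod (BN p x)) absolutely_integrable_on {0..}"
proof -
  let ?F = "\<lambda>x. cmod (AP p x) + cmod (BN p x)"
  let ?G = "\<lambda>x. (\<Sum>k=1..p. cmod (cc k) * exp (- Re (r k) * x)) + (\<Sum>k=p+1..n. cmod (cc k) * exp (- (- Re (r k)) * x))"
  have cF: "continuous_on UNIV ?F" unfolding AP_def BN_def by (intro continuous_intros)
  show ?thesis
  proof (rule measurable_bounded_by_integrable_imp_absolutely_integrable[where g = ?G])
    show "?F \<in> borel_measurable (lebesgue_on {0..})"
      by (rule continuous_imp_measurable_on_sets_lebesgue[OF continuous_on_subset[OF cF]]) auto
    show "{0::real..} \<in> sets lebesgue" by (metis borel_closed closed_atLeast sets_completionI_sets sets_lborel)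
    show "?G integrable_on {0..}"
      using pos neg
      by (intro integrable_add integrable_sum) (auto intro!: exp_int1 exp_int2)
    fix x :: real assume "x \<in> {0..}"
    have "cmod (AP p x) \<le> (\<Sum>k=1..p. cmod (cc k) * exp (- Re (r k) * x))"
      unfolding AP_def by (rule order.trans[OF norm_sum]) (simp add: norm_mult)
    moreover have "cmod (BN p x) \<le> (\<Sum>k=p+1..n. cmod (cc k) * exp (- (- Re (r k)) * x))"
      unfolding BN_def by (rule order.trans[OF norm_sum]) (simp add: norm_mult)
    ultimately show "norm (?F x) \<le> ?G x" by simp
  qed
qed

end

context setting begin
lemma kerf_diff: "kerf G t - kerf G2 t = kerf (\<lambda>k. G k - G2 k) t"
  unfolding kerf_def by (simp add: sum_subtractf cv.scale_right_diff_distrib)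
end

theorem theorem1:
  fixes n p :: nat and a r :: "nat \<Rightarrow> complex" and \<epsilon> K :: real
    and y :: "real \<Rightarrow> 'x::complex_banach"
  assumes "n \<ge> 1"
    and roots: "\<forall>k\<in>{1..n}. char_poly n a (r k) = 0"
    and distinct: "inj_on r {1..n}"
    and "\<forall>k\<in>{1..n}. Re (r k) \<noteq> 0"
    and "p \<le> n"
    and pos: "\<forall>k\<in>{1..p}. Re (r k) > 0"
    and neg: "\<forall>k\<in>{p+1..n}. Re (r k) < 0"
    and "\<epsilon> > 0"
    and K_def: "K = (1 / cmod (vandermonde (map r [1..<n+1]))) *
        (LBINT x:{0..}.
           cmod (\<Sum>k=1..p. (-1)^k * vandermonde (map r ([1..<k] @ [k+1..<n+1])) * exp (- r k * complex_of_real x))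
         + cmod (\<Sum>k=p+1..n. (-1)^k * vandermonde (map r ([1..<k] @ [k+1..<n+1])) * exp (r k * complex_of_real x)))"
    and "y \<in> Cn n"
    and "sup_norm (Dop n a y) \<le> ereal \<epsilon>"
  shows "\<exists>!yH. yH \<in> Cn n \<and> Dop n a yH = (\<lambda>_. 0) \<and> sup_norm (\<lambda>t. y t - yH t) \<le> ereal (K * \<epsilon>)"
proof -
  note n1 = assms(1) and re = assms(4) and pn = assms(5) and eps = assms(8) and yC = assms(10)
  interpret setting n a r using n1 roots distinct by unfold_locales auto
  define f where "f = Dop n a y"
  have fb: "norm (f t) \<le> \<epsilon>" for t using assms(11) by (simp add: sup_norm_le_iff f_def)
  define g where "g k s = exp (- r k * complex_of_real s) *\<^sub>C ud y k s" for k s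
  have gd: "(g k has_vector_derivative exp (- r k * complex_of_real s) *\<^sub>C f s) (at s)" if "k \<in> {1..n}" for k s
    using g_deriv[OF that yC, of s UNIV] unfolding g_def[abs_def] f_def by simp
  have gnorm: "norm (exp (- r k * complex_of_real s) *\<^sub>C f s) \<le> \<epsilon> * exp (- Re (r k) * s)" for k s
    using fb[of s] by (simp add: norm_cscale mult.commute mult_left_mono)
  have I_split: "{1..n} = {1..p} \<union> {p+1..n}" "{1..p} \<inter> {p+1..n} = {}" using pn by auto
  have ex_pos: "\<exists>L. \<forall>s. norm (g k s - L) \<le> \<epsilon> / Re (r k) * exp (- Re (r k) * s)" if k: "k \<in> {1..p}" for k
  proof (rule tail_limit[where dg = "\<lambda>s. exp (- r k * complex_of_real s) *\<^sub>C f s"])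
    show "0 < Re (r k)" using pos k by auto
    show "(g k has_vector_derivative exp (- r k * complex_of_real x) *\<^sub>C f x) (at x)" for x
      using gd k pn by auto
    show "norm (exp (- r k * complex_of_real x) *\<^sub>C f x) \<le> \<epsilon> * exp (- Re (r k) * x)" for x
      by (rule gnorm)
  qed
  have ex_neg: "\<exists>L. \<forall>s. norm (g k (-s) - L) \<le> \<epsilon> / (- Re (r k)) * exp (- (- Re (r k)) * s)" if k: "k \<in> {p+1..n}" for k
  proof (rule tail_limit[where dg = "\<lambda>s. - (exp (- r k * complex_of_real (-s)) *\<^sub>C f (-s))"])
    show "0 < - Re (r k)" using neg k by auto
    show "((\<lambda>s. g k (-s)) has_vector_derivative - (exp (- r k * complex_of_real (-x)) *\<^sub>C f (-x))) (at x)" for x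
    proof -
      have m: "((\<lambda>s::real. -s) has_vector_derivative -1) (at x)"
        unfolding has_real_derivative_iff_has_vector_derivative[symmetric] by (auto intro!: derivative_eq_intros)
      have "k \<in> {1..n}" using k by auto
      from vector_diff_chain_at[OF m gd[OF this, of "-x"]] show ?thesis by (simp add: o_def)
    qed
    show "norm (- (exp (- r k * complex_of_real (-x)) *\<^sub>C f (-x))) \<le> \<epsilon> * exp (- (- Re (r k)) * x)" for x
      using gnorm[of k "-x"] by simp
  qed
  define P where "P k L = ((k \<le> p \<longrightarrow> (\<forall>s. norm (g k s - L) \<le> \<epsilon> / Re (r k) * exp (- Re (r k) * s))) \<and>
      (p < k \<longrightarrow> (\<forall>s. norm (g k (-s) - L) \<le> \<epsilon> / (- Re (r k)) * exp (- (- Re (r k)) * s))))" for k L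
  have "\<forall>k\<in>{1..n}. \<exists>L. P k L"
  proof
    fix k assume k: "k \<in> {1..n}"
    show "\<exists>L. P k L"
    proof (cases "k \<le> p")
      case True
      with k ex_pos obtain L where "\<forall>s. norm (g k s - L) \<le> \<epsilon> / Re (r k) * exp (- Re (r k) * s)" by force
      then show ?thesis using True by (auto simp: P_def)
    next
      case False
      with k ex_neg obtain L where "\<forall>s. norm (g k (-s) - L) \<le> \<epsilon> / (- Re (r k)) * exp (- (- Re (r k)) * s)" by force
      then show ?thesis using False by (auto simp: P_def)
    qed
  qed
  then obtain C where C: "\<forall>k\<in>{1..n}. P k (C k)" by (metis bchoice)
  define yH where "yH = kerf (\<lambda>k. cc k *\<^sub>C C k)"
  have yH_Cn: "yH \<in> Cn n" by (simp add: yH_def kerf_Cn)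
  have yH_D: "Dop n a yH = (\<lambda>_. 0)" by (simp add: yH_def Dop_kerf)
  let ?F = "\<lambda>x. cmod (AP p x) + cmod (BN p x)"
  have cA: "continuous_on UNIV (\<lambda>x. cmod (AP p x))" unfolding AP_def by (intro continuous_intros)
  have cB: "continuous_on UNIV (\<lambda>x. cmod (BN p x))" unfolding BN_def by (intro continuous_intros)
  have cF: "continuous_on UNIV ?F" by (rule continuous_on_add[OF cA cB])
  have K_eq: "K = (LBINT x:{0..}. ?F x)"
  proof -
    have VV0: "cmod VV \<noteq> 0" using VV_nonzero by simp
    have i1: "(\<Sum>k=1..p. (-1)^k * Vk k * exp (- r k * complex_of_real x)) = (-1)^n * VV * AP p x" for x
      unfolding AP_def sum_distrib_left
      by (rule sum.cong[OF refl]) (use cc_vandermonde pn in \<open>auto simp: mult.assoc\<close>)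
    have i2: "(\<Sum>k=p+1..n. (-1)^k * Vk k * exp (r k * complex_of_real x)) = (-1)^n * VV * BN p x" for x
      unfolding BN_def sum_distrib_left
      by (rule sum.cong[OF refl]) (use cc_vandermonde pn in \<open>auto simp: mult.assoc\<close>)
    have "K = 1 / cmod VV * (LBINT x:{0..}. cmod VV * ?F x)"
      unfolding K_def i1 i2 by (simp add: norm_mult norm_power distrib_left)
    also have "\<dots> = (LBINT x:{0..}. ?F x)" using VV0 by simp
    finally show ?thesis .
  qed
  have FI: "?F absolutely_integrable_on {0..}" by (rule FAB_integrable[OF pn pos neg])
  have Fint: "?F integrable_on {0..}" using FI set_lebesgue_integral_eq_integral(1) by blast
  have LB: "(LBINT x:{0..}. ?F x) = integral {0..} ?F"
  proof -
    have meas: "(\<lambda>x. indicator {0::real..} x *\<^sub>R ?F x) \<in> borel_measurable lborel"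
      using borel_measurable_continuous_onI[OF cF] by measurable
    have "set_integrable lborel {0..} ?F"
      using FI integrable_completion[OF meas] unfolding set_integrable_def by simp
    then show ?thesis by (rule set_borel_integral_eq_integral(2))
  qed
  have Fint_le: "integral {0..T} (\<lambda>x. cmod (AP p x)) + integral {0..T} (\<lambda>x. cmod (BN p x)) \<le> K" if "T \<ge> 0" for T
  proof -
    have "integral {0..T} (\<lambda>x. cmod (AP p x)) + integral {0..T} (\<lambda>x. cmod (BN p x)) = integral {0..T} ?F"
      by (rule integral_add[symmetric]; rule integrable_continuous_interval; rule continuous_on_subset[OF _ subset_UNIV]; fact)
    also have "\<dots> \<le> integral {0..} ?F"
      by (rule integral_subset_le) (auto intro: integrable_continuous_interval continuous_on_subset[OF cF] Fint)
    finally show ?thesis using K_eq LB by simp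
  qed
  have K0: "K \<ge> 0" using Fint_le[of 0] by simp
  have main: "norm (y t - yH t) \<le> K * \<epsilon>" for t
  proof -
    define \<Phi> where "\<Phi> s = (\<Sum>k=1..p. (cc k * exp (r k * complex_of_real t)) *\<^sub>C g k (t + s))" for s
    define \<Psi> where "\<Psi> s = (\<Sum>k=p+1..n. (cc k * exp (r k * complex_of_real t)) *\<^sub>C g k (t - s))" for s
    have y0: "y t = \<Phi> 0 + \<Psi> 0"
    proof -
      have "y t = (\<Sum>k\<in>{1..n}. cc k *\<^sub>C ud y k t)" by (rule y_ud[OF yC])
      also have "\<dots> = (\<Sum>k\<in>{1..n}. (cc k * exp (r k * complex_of_real t)) *\<^sub>C g k t)"
        by (rule sum.cong[OF refl]) (simp add: g_def mult.assoc exp_add[symmetric])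
      also have "\<dots> = \<Phi> 0 + \<Psi> 0"
        unfolding \<Phi>_def \<Psi>_def I_split(1) by (simp add: sum.union_disjoint I_split(2))
      finally show ?thesis .
    qed
    have yHt: "yH t = (\<Sum>k=1..p. (cc k * exp (r k * complex_of_real t)) *\<^sub>C C k) + (\<Sum>k=p+1..n. (cc k * exp (r k * complex_of_real t)) *\<^sub>C C k)"
      unfolding yH_def kerf_def I_split(1) by (subst sum.union_disjoint) (auto simp: I_split(2) mult.commute)
    have lim: "(\<lambda>m::nat. \<Phi> (real m) + \<Psi> (real m)) \<longlonglongrightarrow> yH t"
    proof -
      have l1: "(\<lambda>m::nat. g k (t + real m)) \<longlonglongrightarrow> C k" if k: "k \<in> {1..p}" for k
      proof (rule tail_seq)
        show "0 < Re (r k)" using pos k by auto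
        show "\<forall>s. norm (g k s - C k) \<le> \<epsilon> / Re (r k) * exp (- Re (r k) * s)"
          using C k pn by (auto simp: P_def)
      qed
      have l2: "(\<lambda>m::nat. g k (t - real m)) \<longlonglongrightarrow> C k" if k: "k \<in> {p+1..n}" for k
      proof -
        have "(\<lambda>m::nat. (\<lambda>s. g k (-s)) (-t + real m)) \<longlonglongrightarrow> C k"
        proof (rule tail_seq)
          show "0 < - Re (r k)" using neg k by auto
          show "\<forall>s. norm (g k (-s) - C k) \<le> \<epsilon> / (- Re (r k)) * exp (- (- Re (r k)) * s)"
            using C k by (auto simp: P_def)
        qed
        then show ?thesis by simp
      qed
      have "(\<lambda>m::nat. \<Phi> (real m) + \<Psi> (real m)) \<longlonglongrightarrow>
          (\<Sum>k=1..p. (cc k * exp (r k * complex_of_real t)) *\<^sub>C C k) + (\<Sum>k=p+1..n. (cc k * exp (r k * complex_of_real t)) *\<^sub>C C k)"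
        unfolding \<Phi>_def \<Psi>_def
        by (intro tendsto_add tendsto_sum bounded_linear.tendsto[OF bl_cscale] l1 l2) auto
      then show ?thesis using yHt by simp
    qed
    have bnd: "norm (y t - (\<Phi> (real m) + \<Psi> (real m))) \<le> K * \<epsilon>" for m :: nat
    proof (cases "m = 0")
      case True
      then show ?thesis using y0 K0 eps by simp
    next
      case False
      define T where "T = real m"
      have T: "0 < T" using False by (simp add: T_def)
      have d\<Phi>: "(\<Phi> has_vector_derivative AP p s *\<^sub>C f (t + s)) (at s)" for s
      proof -
        have "(\<Phi> has_vector_derivative (\<Sum>k=1..p. (cc k * exp (r k * complex_of_real t)) *\<^sub>C (1 *\<^sub>R (exp (- r k * complex_of_real (t + s)) *\<^sub>C f (t + s))))) (at s)"
          unfolding \<Phi>_def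
        proof (intro has_vector_derivative_sum has_vd_cscale_const)
          fix k assume k: "k \<in> {1..p}"
          have sh: "((\<lambda>s::real. t + s) has_vector_derivative 1) (at s)"
            unfolding has_real_derivative_iff_has_vector_derivative[symmetric] by (auto intro!: derivative_eq_intros)
          have "k \<in> {1..n}" using k pn by auto
          from vector_diff_chain_at[OF sh gd[OF this, of "t + s"]]
          show "((\<lambda>x. g k (t + x)) has_vector_derivative 1 *\<^sub>R (exp (- r k * complex_of_real (t + s)) *\<^sub>C f (t + s))) (at s)"
            by (simp add: o_def)
        qed
        moreover have "(\<Sum>k=1..p. (cc k * exp (r k * complex_of_real t)) *\<^sub>C (1 *\<^sub>R (exp (- r k * complex_of_real (t + s)) *\<^sub>C f (t + s)))) = AP p s *\<^sub>C f (t + s)"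
        proof -
          have e: "exp (r k * complex_of_real t) * exp (- (r k * (complex_of_real t + complex_of_real s))) = exp (- (r k * complex_of_real s))" for k
            by (subst exp_add[symmetric]) (simp add: ring_distribs)
          show ?thesis unfolding AP_def
            by (simp add: cscale_cscale cv.scale_sum_left mult.assoc e)
        qed
        ultimately show ?thesis by simp
      qed
      have d\<Psi>: "(\<Psi> has_vector_derivative - (BN p s *\<^sub>C f (t - s))) (at s)" for s
      proof -
        have "(\<Psi> has_vector_derivative (\<Sum>k=p+1..n. (cc k * exp (r k * complex_of_real t)) *\<^sub>C ((-1) *\<^sub>R (exp (- r k * complex_of_real (t - s)) *\<^sub>C f (t - s))))) (at s)"
          unfolding \<Psi>_def
        proof (intro has_vector_derivative_sum has_vd_cscale_const)
          fix k assume k: "k \<in> {p+1..n}"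
          have sh: "((\<lambda>s::real. t - s) has_vector_derivative -1) (at s)"
            unfolding has_real_derivative_iff_has_vector_derivative[symmetric] by (auto intro!: derivative_eq_intros)
          have "k \<in> {1..n}" using k pn by auto
          from vector_diff_chain_at[OF sh gd[OF this, of "t - s"]]
          show "((\<lambda>x. g k (t - x)) has_vector_derivative (-1) *\<^sub>R (exp (- r k * complex_of_real (t - s)) *\<^sub>C f (t - s))) (at s)"
            by (simp add: o_def)
        qed
        moreover have "(\<Sum>k=p+1..n. (cc k * exp (r k * complex_of_real t)) *\<^sub>C ((-1) *\<^sub>R (exp (- r k * complex_of_real (t - s)) *\<^sub>C f (t - s)))) = - (BN p s *\<^sub>C f (t - s))"
        proof -
          have e: "exp (r k * complex_of_real t) * exp (- (r k * (complex_of_real t - complex_of_real s))) = exp (r k * complex_of_real s)" for k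
            by (subst exp_add[symmetric]) (simp add: ring_distribs)
          show ?thesis unfolding BN_def
            by (simp add: cscale_cscale cv.scale_sum_left mult.assoc e sum_negf)
        qed
        ultimately show ?thesis by simp
      qed
      have n\<Phi>: "norm (\<Phi> T - \<Phi> 0) \<le> integral {0..T} (\<lambda>s. \<epsilon> * cmod (AP p s))"
      proof (rule deriv_integral_bound[OF T d\<Phi>])
        show "continuous_on UNIV (\<lambda>s. \<epsilon> * cmod (AP p s))" by (rule continuous_on_mult[OF continuous_on_const cA])
        show "norm (AP p s *\<^sub>C f (t + s)) \<le> \<epsilon> * cmod (AP p s)" for s
          using mult_left_mono[OF fb[of "t + s"], of "cmod (AP p s)"] by (simp add: norm_cscale mult.commute)
      qed
      have n\<Psi>: "norm (\<Psi> T - \<Psi> 0) \<le> integral {0..T} (\<lambda>s. \<epsilon> * cmod (BN p s))"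
      proof (rule deriv_integral_bound[OF T d\<Psi>])
        show "continuous_on UNIV (\<lambda>s. \<epsilon> * cmod (BN p s))" by (rule continuous_on_mult[OF continuous_on_const cB])
        show "norm (- (BN p s *\<^sub>C f (t - s))) \<le> \<epsilon> * cmod (BN p s)" for s
          using mult_left_mono[OF fb[of "t - s"], of "cmod (BN p s)"] by (simp add: norm_cscale mult.commute)
      qed
      have "norm (y t - (\<Phi> T + \<Psi> T)) = norm ((\<Phi> T - \<Phi> 0) + (\<Psi> T - \<Psi> 0))"
        using y0 by (simp add: norm_minus_commute algebra_simps)
      also have "\<dots> \<le> norm (\<Phi> T - \<Phi> 0) + norm (\<Psi> T - \<Psi> 0)" by (rule norm_triangle_ineq)
      also have "\<dots> \<le> \<epsilon> * (integral {0..T} (\<lambda>x. cmod (AP p x)) + integral {0..T} (\<lambda>x. cmod (BN p x)))"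
        using n\<Phi> n\<Psi> by (simp add: distrib_left)
      also have "\<dots> \<le> \<epsilon> * K" using Fint_le[of T] T eps by (intro mult_left_mono) auto
      finally show ?thesis by (simp add: T_def mult.commute)
    qed
    have "(\<lambda>m::nat. norm (y t - (\<Phi> (real m) + \<Psi> (real m)))) \<longlonglongrightarrow> norm (y t - yH t)"
      by (intro tendsto_norm tendsto_diff tendsto_const lim)
    then show ?thesis using bnd by (intro Lim_bounded[of _ _ 0]) auto
  qed
  show ?thesis
  proof (rule ex1I[of _ yH])
    show "yH \<in> Cn n \<and> Dop n a yH = (\<lambda>_. 0) \<and> sup_norm (\<lambda>t. y t - yH t) \<le> ereal (K * \<epsilon>)"
      using yH_Cn yH_D main by (simp add: sup_norm_le_iff)
  next
    fix y1 assume H1: "y1 \<in> Cn n \<and> Dop n a y1 = (\<lambda>_. 0) \<and> sup_norm (\<lambda>t. y t - y1 t) \<le> ereal (K * \<epsilon>)"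
    define G1 where "G1 = (\<lambda>k. cc k *\<^sub>C (exp (- r k * complex_of_real 0) *\<^sub>C ud y1 k 0))"
    define G2 where "G2 = (\<lambda>k. cc k *\<^sub>C (exp (- r k * complex_of_real 0) *\<^sub>C ud yH k 0))"
    have r1: "y1 = kerf G1" unfolding G1_def using H1 by (intro ker_repr) auto
    have r2: "yH = kerf G2" unfolding G2_def using yH_Cn yH_D by (intro ker_repr) auto
    have b1: "norm (y t - y1 t) \<le> K * \<epsilon>" for t using H1 by (simp add: sup_norm_le_iff)
    have bd: "\<forall>t. norm (kerf (\<lambda>k. G1 k - G2 k) t) \<le> 2 * (K * \<epsilon>)"
    proof
      fix t
      have "kerf (\<lambda>k. G1 k - G2 k) t = (y t - yH t) - (y t - y1 t)"
        by (simp add: kerf_diff[symmetric] r1[symmetric] r2[symmetric])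
      also have "norm \<dots> \<le> norm (y t - yH t) + norm (y t - y1 t)" by (rule norm_triangle_ineq4)
      also have "\<dots> \<le> 2 * (K * \<epsilon>)" using main[of t] b1[of t] by simp
      finally show "norm (kerf (\<lambda>k. G1 k - G2 k) t) \<le> 2 * (K * \<epsilon>)" .
    qed
    have "G1 k - G2 k = 0" if "k \<in> {1..n}" for k
      by (rule kerf_bounded_zero[OF re bd that])
    then have "kerf G1 = kerf G2"
      unfolding kerf_def by (intro ext sum.cong refl) auto
    then show "y1 = yH" using r1 r2 by simp
  qed
qed

end
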